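(* In the two-principal common agency setting, suppose the cost $c$ is convex and homogeneous of degree $k_c>1$, the utilities $u_{P_1},u_{P_2}$ are concave and homogeneous of degree $k_u$ with $0<k_u<k_c$, and optima are interior with $SW^*_{\mathsf{FB}}>0$. Then $$\frac{SW^*_{\mathsf{LIN}}}{SW^*_{\mathsf{FB}}}=\frac{k_c(2k_c-1)^{-\frac{k_u}{k_c-k_u}}-k_u(2k_c-1)^{-\frac{k_c}{k_c-k_u}}}{k_c-k_u}.$$
   Context: Two principals offer linear contracts $\phi_{P_1},\phi_{P_2}\in\mathbb R^d$ to one agent who chooses $a\in\mathbb R_+^d$ to maximize $\langle\phi_{P_1}+\phi_{P_2},a\rangle-c(a)$; principal $i$'s payoff is $u_{P_i}(a)-\langle\phi_{P_i},a\rangle$. The linear-contract equilibrium action $a^*_{\mathsf{LIN}}$ is the action satisfying $\nabla c(a)=\frac{\nabla u_{P_1}(a)+\nabla u_{P_2}(a)}{2k_c-1}$. First-best social welfare: $SW^*_{\mathsf{FB}}=\max_a\{u_{P_1}(a)+u_{P_2}(a)-c(a)\}$; linear social welfare: $SW^*_{\mathsf{LIN}}=u_{P_1}(a^*_{\mathsf{LIN}})+u_{P_2}(a^*_{\mathsf{LIN}})-c(a^*_{\mathsf{LIN}})$. Homogeneous of degree $k$: $g(\lambda a)=\lambda^kg(a)$ for $\lambda>0$. *)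

theory Defs
  imports "HOL-Analysis.Analysis"
begin

definition orthant :: "(real ^ 'd) set" where
  "orthant = {a. \<forall>i. 0 \<le> a $ i}"

definition pos_orthant :: "(real ^ 'd) set" where
  "pos_orthant = {a. \<forall>i. 0 < a $ i}"

definition homogeneous_on :: "(real ^ 'd) set \<Rightarrow> real \<Rightarrow> (real ^ 'd \<Rightarrow> real) \<Rightarrow> bool" where
  "homogeneous_on S k g \<longleftrightarrow> (\<forall>lam > 0. \<forall>a \<in> S. g (lam *\<^sub>R a) = lam powr k * g a)"

definition has_gradient :: "(real ^ 'd \<Rightarrow> real) \<Rightarrow> real ^ 'd \<Rightarrow> real ^ 'd \<Rightarrow> bool" where
  "has_gradient f g x \<longleftrightarrow> (f has_derivative (\<lambda>h. g \<bullet> h)) (at x)"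

definition SW_FB :: "(real ^ 'd \<Rightarrow> real) \<Rightarrow> (real ^ 'd \<Rightarrow> real) \<Rightarrow> (real ^ 'd \<Rightarrow> real) \<Rightarrow> real" where
  "SW_FB u1 u2 c = (SUP a \<in> orthant. u1 a + u2 a - c a)"

text \<open>Social welfare at an action (used at the linear-contract equilibrium action).\<close>
definition SW_at :: "(real ^ 'd \<Rightarrow> real) \<Rightarrow> (real ^ 'd \<Rightarrow> real) \<Rightarrow> (real ^ 'd \<Rightarrow> real) \<Rightarrow> real ^ 'd \<Rightarrow> real" where
  "SW_at u1 u2 c a = u1 a + u2 a - c a"

end

theory Submission
  imports Defs
begin

lemma open_pos_orthant: "open (pos_orthant :: (real^'d) set)"
proof -
  have "pos_orthant = (\<Inter>i\<in>UNIV. {x::real^'d. x$i > 0})" unfolding pos_orthant_def by auto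
  moreover have "open (\<Inter>i\<in>UNIV. {x::real^'d. x$i > 0})"
    by (rule open_INT) (auto intro: open_halfspace_component_gt_cart)
  ultimately show ?thesis by metis
qed

lemma pos_sub: "pos_orthant \<subseteq> orthant"
  unfolding pos_orthant_def orthant_def by (auto intro: less_imp_le)

lemma scale_pos: "a \<in> pos_orthant \<Longrightarrow> t > 0 \<Longrightarrow> t *\<^sub>R a \<in> pos_orthant"
  unfolding pos_orthant_def by auto

lemma euler:
  fixes f :: "real^'d \<Rightarrow> real"
  assumes hom: "homogeneous_on orthant k f"
    and grad: "has_gradient f g a" and a: "a \<in> pos_orthant"
  shows "g \<bullet> a = k * f a"
proof -
  have d1: "((\<lambda>l. f (l *\<^sub>R a)) has_derivative (\<lambda>l. g \<bullet> (l *\<^sub>R a))) (at 1)"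
    using grad unfolding has_gradient_def
    by (intro has_derivative_compose[where f="\<lambda>l. l *\<^sub>R a" and g=f, simplified]
        has_derivative_scaleR_left has_derivative_ident) simp_all
  have eq: "\<And>l. l \<in> {0<..} \<Longrightarrow> f (l *\<^sub>R a) = l powr k * f a"
    using hom a pos_sub unfolding homogeneous_on_def by auto
  have d2: "((\<lambda>l. l powr k * f a) has_derivative (\<lambda>l. g \<bullet> (l *\<^sub>R a))) (at 1)"
    by (rule has_derivative_transform_within_open[OF d1 open_greaterThan[of 0]]) (auto simp: eq)
  hence D1: "((\<lambda>l. l powr k * f a) has_field_derivative (g \<bullet> a)) (at 1)"
    unfolding has_field_derivative_def by (rule has_derivative_eq_rhs) (auto simp: fun_eq_iff)
  have D2: "((\<lambda>l. l powr k * f a) has_field_derivative (k * 1 powr (k - 1) * f a)) (at 1)"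
    by (auto intro!: derivative_eq_intros)
  have "g \<bullet> a = k * 1 powr (k - 1) * f a" by (rule DERIV_unique[OF D1 D2])
  then show ?thesis by simp
qed

lemma grad_hom:
  fixes f :: "real^'d \<Rightarrow> real"
  assumes hom: "homogeneous_on orthant k f"
    and grad: "\<And>a. a \<in> pos_orthant \<Longrightarrow> has_gradient f (g a) a"
    and a: "a \<in> pos_orthant" and t: "t > 0"
  shows "g (t *\<^sub>R a) = t powr (k - 1) *\<^sub>R g a"
proof -
  have ta: "t *\<^sub>R a \<in> pos_orthant" using scale_pos a t by auto
  have d1: "((\<lambda>x. f (t *\<^sub>R x)) has_derivative (\<lambda>h. g (t *\<^sub>R a) \<bullet> (t *\<^sub>R h))) (at a)"
    using grad[OF ta] unfolding has_gradient_def
    by (intro has_derivative_compose[where f="\<lambda>x. t *\<^sub>R x" and g=f, simplified]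
        has_derivative_scaleR_right has_derivative_ident) simp_all
  have eq: "\<And>x. x \<in> pos_orthant \<Longrightarrow> f (t *\<^sub>R x) = t powr k * f x"
    using hom pos_sub t unfolding homogeneous_on_def by auto
  have d2: "((\<lambda>x. t powr k * f x) has_derivative (\<lambda>h. g (t *\<^sub>R a) \<bullet> (t *\<^sub>R h))) (at a)"
    by (rule has_derivative_transform_within_open[OF d1 open_pos_orthant a]) (auto simp: eq)
  have d3: "((\<lambda>x. t powr k * f x) has_derivative (\<lambda>h. t powr k * (g a \<bullet> h))) (at a)"
    using grad[OF a] unfolding has_gradient_def by (intro has_derivative_mult_right)
  have E: "(\<lambda>h. g (t *\<^sub>R a) \<bullet> (t *\<^sub>R h)) = (\<lambda>h. t powr k * (g a \<bullet> h))"
    using has_derivative_unique[OF d2 d3] .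
  define d where "d = t *\<^sub>R g (t *\<^sub>R a) - t powr k *\<^sub>R g a"
  have "d \<bullet> d = 0" using fun_cong[OF E, of d] unfolding d_def
    by (simp add: inner_diff_left)
  hence "d = 0" by simp
  hence "t *\<^sub>R g (t *\<^sub>R a) = t powr k *\<^sub>R g a" unfolding d_def by simp
  hence "inverse t *\<^sub>R (t *\<^sub>R g (t *\<^sub>R a)) = inverse t *\<^sub>R (t powr k *\<^sub>R g a)" by simp
  hence "g (t *\<^sub>R a) = (t powr k / t) *\<^sub>R g a" using t
    by (simp add: divide_inverse mult.commute)
  moreover have "t powr k / t = t powr (k - 1)" using t by (simp add: powr_diff)
  ultimately show ?thesis by simp
qed

lemma foc_max:
  fixes W :: "real^'d \<Rightarrow> real"
  assumes conc: "concave_on orthant W" and b: "b \<in> pos_orthant"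
    and d: "(W has_derivative (\<lambda>h. 0)) (at b)" and x: "x \<in> orthant"
  shows "W x \<le> W b"
proof -
  define v where "v = x - b"
  define A where "A = {s::real. b + s *\<^sub>R v \<in> orthant}"
  define B where "B = {s::real. b + s *\<^sub>R v \<in> pos_orthant}"
  have cvx: "convex (orthant::(real^'d) set)" using conc by (simp add: concave_on_iff)
  have convA: "convex A" unfolding A_def convex_def
  proof safe
    fix s1 s2 u w :: real
    assume h: "b + s1 *\<^sub>R v \<in> orthant" "b + s2 *\<^sub>R v \<in> orthant" "0 \<le> u" "0 \<le> w" "u + w = 1"
    have "u *\<^sub>R (b + s1 *\<^sub>R v) + w *\<^sub>R (b + s2 *\<^sub>R v) = (u + w) *\<^sub>R b + (u * s1 + w * s2) *\<^sub>R v"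
      by (simp add: algebra_simps)
    also have "\<dots> = b + (u *\<^sub>R s1 + w *\<^sub>R s2) *\<^sub>R v" using h(5) by simp
    finally have eq: "u *\<^sub>R (b + s1 *\<^sub>R v) + w *\<^sub>R (b + s2 *\<^sub>R v) = b + (u *\<^sub>R s1 + w *\<^sub>R s2) *\<^sub>R v" .
    have "u *\<^sub>R (b + s1 *\<^sub>R v) + w *\<^sub>R (b + s2 *\<^sub>R v) \<in> orthant"
      by (rule convexD[OF cvx h(1) h(2) h(3) h(4) h(5)])
    then show "b + (u *\<^sub>R s1 + w *\<^sub>R s2) *\<^sub>R v \<in> orthant" by (simp only: eq)
  qed
  have "B = (\<lambda>s. b + s *\<^sub>R v) -` pos_orthant" unfolding B_def by auto
  hence openB: "open B" by (auto intro!: open_vimage open_pos_orthant continuous_intros)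
  have "0 \<in> B" using b unfolding B_def by simp
  moreover have "B \<subseteq> A" unfolding A_def B_def using pos_sub by auto
  ultimately have intA: "0 \<in> interior A" using openB interiorI by blast
  have convphi: "convex_on A (\<lambda>s. - W (b + s *\<^sub>R v))"
  proof (rule convex_onI[OF _ convA])
    fix t y z :: real assume t: "0 < t" "t < 1" and yz: "y \<in> A" "z \<in> A"
    have "convex_on orthant (\<lambda>x. - W x)" using conc by (simp add: concave_on_def)
    from convex_onD[OF this, of t "b + y *\<^sub>R v" "b + z *\<^sub>R v"] t yz
    have "- W ((1 - t) *\<^sub>R (b + y *\<^sub>R v) + t *\<^sub>R (b + z *\<^sub>R v))
          \<le> (1 - t) * - W (b + y *\<^sub>R v) + t * - W (b + z *\<^sub>R v)"
      unfolding A_def by auto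
    moreover have "(1 - t) *\<^sub>R (b + y *\<^sub>R v) + t *\<^sub>R (b + z *\<^sub>R v) = b + ((1 - t) *\<^sub>R y + t *\<^sub>R z) *\<^sub>R v"
      by (simp add: algebra_simps)
    ultimately show "- W (b + ((1 - t) *\<^sub>R y + t *\<^sub>R z) *\<^sub>R v)
          \<le> (1 - t) * - W (b + y *\<^sub>R v) + t * - W (b + z *\<^sub>R v)" by simp
  qed
  have "((\<lambda>s. W (b + s *\<^sub>R v)) has_derivative (\<lambda>s. 0)) (at 0)"
    using d
    by (intro has_derivative_compose[where f="\<lambda>s. b + s *\<^sub>R v" and g=W, simplified]
        derivative_eq_intros) auto
  hence "((\<lambda>s. - W (b + s *\<^sub>R v)) has_derivative (\<lambda>s. 0 * s)) (at 0)"
    using has_derivative_minus by fastforce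
  hence der: "((\<lambda>s. - W (b + s *\<^sub>R v)) has_field_derivative 0) (at 0 within A)"
    unfolding has_field_derivative_def by (rule has_derivative_at_withinI)
  have one: "1 \<in> A" using x unfolding A_def v_def by simp
  have "0 * (1 - 0) \<le> (\<lambda>s. - W (b + s *\<^sub>R v)) 1 - (\<lambda>s. - W (b + s *\<^sub>R v)) 0"
    by (rule convex_on_imp_above_tangent[OF convphi convex_connected[OF convA] intA one der])
  hence "W (b + v) \<le> W b" by simp
  thus ?thesis unfolding v_def by simp
qed


lemma final_alg:
  fixes U p m kc ku :: real
  assumes "U \<noteq> 0" "p > 0" "kc > 1" "m > 1" "ku < kc" "0 < ku"
  shows "(U - ku * U / (kc * m)) / (p * U * (kc - ku) / kc) = (kc * (1 / p) - ku * (1 / (p * m))) / (kc - ku)"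
proof -
  have kc0: "kc \<noteq> 0" "m \<noteq> 0" "p \<noteq> 0" "kc - ku \<noteq> 0" using assms by auto
  have 1: "U - ku * U / (kc * m) = U * (kc * m - ku) / (kc * m)" using kc0 by (simp add: field_simps)
  have 2: "kc * (1 / p) - ku * (1 / (p * m)) = (kc * m - ku) / (p * m)" using kc0 by (simp add: field_simps)
  show ?thesis unfolding 1 2 using kc0 assms(1) by (simp add: field_simps)
qed

theorem mainTheorem11:
  fixes c u1 u2 :: "real ^ 'd \<Rightarrow> real"
    and gc gu1 gu2 :: "real ^ 'd \<Rightarrow> real ^ 'd"
    and kc ku :: real
    and a_lin :: "real ^ 'd"
  assumes kc: "kc > 1"
    and ku: "0 < ku" "ku < kc"
    and c_convex: "convex_on orthant c"
    and u1_concave: "concave_on orthant u1"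
    and u2_concave: "concave_on orthant u2"
    and c_hom: "homogeneous_on orthant kc c"
    and u1_hom: "homogeneous_on orthant ku u1"
    and u2_hom: "homogeneous_on orthant ku u2"
    and c_grad: "\<And>a. a \<in> pos_orthant \<Longrightarrow> has_gradient c (gc a) a"
    and u1_grad: "\<And>a. a \<in> pos_orthant \<Longrightarrow> has_gradient u1 (gu1 a) a"
    and u2_grad: "\<And>a. a \<in> pos_orthant \<Longrightarrow> has_gradient u2 (gu2 a) a"
    and fb_interior: "\<exists>a_fb \<in> pos_orthant. \<forall>a \<in> orthant.
                        u1 a + u2 a - c a \<le> u1 a_fb + u2 a_fb - c a_fb"
    and lin_interior: "a_lin \<in> pos_orthant"
    and lin_eq: "gc a_lin = (1 / (2 * kc - 1)) *\<^sub>R (gu1 a_lin + gu2 a_lin)"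
    and fb_pos: "SW_FB u1 u2 c > 0"
  shows "SW_at u1 u2 c a_lin / SW_FB u1 u2 c =
           (kc * (2 * kc - 1) powr (- ku / (kc - ku))
             - ku * (2 * kc - 1) powr (- kc / (kc - ku))) / (kc - ku)"
proof -
  define m where "m = 2 * kc - 1"
  have m1: "m > 1" using kc unfolding m_def by simp
  define t where "t = m powr (1 / (kc - ku))"
  have t0: "t > 0" using m1 unfolding t_def by simp
  define a where "a = a_lin"
  have a: "a \<in> pos_orthant" using lin_interior a_def by simp
  have ao: "a \<in> orthant" using a pos_sub by auto
  define b where "b = t *\<^sub>R a"
  have b: "b \<in> pos_orthant" unfolding b_def using scale_pos[OF a t0] .
  have bo: "b \<in> orthant" using b pos_sub by auto
  have e_c: "gc a \<bullet> a = kc * c a" using euler[OF c_hom c_grad[OF a] a] .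
  have e_1: "gu1 a \<bullet> a = ku * u1 a" using euler[OF u1_hom u1_grad[OF a] a] .
  have e_2: "gu2 a \<bullet> a = ku * u2 a" using euler[OF u2_hom u2_grad[OF a] a] .
  have "gc a \<bullet> a = (1 / m) * ((gu1 a + gu2 a) \<bullet> a)"
    using lin_eq unfolding a_def m_def by simp
  hence ca: "kc * c a = (1 / m) * (ku * (u1 a + u2 a))"
    using e_c e_1 e_2 by (simp add: inner_add_left algebra_simps)
  have tm: "t powr (kc - ku) = m"
    unfolding t_def using m1 ku by (simp add: powr_powr)
  have tk: "t powr (kc - 1) = t powr (ku - 1) * m"
  proof -
    have "t powr (kc - 1) = t powr ((ku - 1) + (kc - ku))" by simp
    also have "\<dots> = t powr (ku - 1) * t powr (kc - ku)" by (rule powr_add)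
    finally show ?thesis using tm by simp
  qed
  have gcb: "gc b = t powr (kc - 1) *\<^sub>R gc a"
    unfolding b_def by (rule grad_hom[OF c_hom c_grad a t0])
  have g1b: "gu1 b = t powr (ku - 1) *\<^sub>R gu1 a"
    unfolding b_def by (rule grad_hom[OF u1_hom u1_grad a t0])
  have g2b: "gu2 b = t powr (ku - 1) *\<^sub>R gu2 a"
    unfolding b_def by (rule grad_hom[OF u2_hom u2_grad a t0])
  have foc: "gc b = gu1 b + gu2 b"
    using gcb g1b g2b tk lin_eq m1 unfolding a_def m_def
    by (simp add: scaleR_add_right)
  have dW: "((\<lambda>x. u1 x + u2 x - c x) has_derivative (\<lambda>h. 0)) (at b)"
  proof -
    have "((\<lambda>x. u1 x + u2 x - c x) has_derivative
           (\<lambda>h. gu1 b \<bullet> h + gu2 b \<bullet> h - gc b \<bullet> h)) (at b)"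
      using u1_grad[OF b] u2_grad[OF b] c_grad[OF b] unfolding has_gradient_def
      by (intro has_derivative_diff has_derivative_add)
    then show ?thesis
      by (rule has_derivative_eq_rhs) (auto simp: fun_eq_iff foc inner_add_left)
  qed
  have concW: "concave_on orthant (\<lambda>x. u1 x + u2 x - c x)"
  proof -
    have "convex_on orthant (\<lambda>x. (- u1 x + - u2 x) + c x)"
      using u1_concave u2_concave c_convex unfolding concave_on_def
      by (intro convex_on_add) auto
    then show ?thesis unfolding concave_on_def by (simp add: algebra_simps)
  qed
  have maxb: "\<And>x. x \<in> orthant \<Longrightarrow> u1 x + u2 x - c x \<le> u1 b + u2 b - c b"
    using foc_max[OF concW b dW] by blast
  have FB: "SW_FB u1 u2 c = u1 b + u2 b - c b"
    unfolding SW_FB_def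
    by (rule cSup_eq_maximum) (use bo maxb in auto)
  have hb1: "u1 b = t powr ku * u1 a" using u1_hom t0 ao unfolding homogeneous_on_def b_def by auto
  have hb2: "u2 b = t powr ku * u2 a" using u2_hom t0 ao unfolding homogeneous_on_def b_def by auto
  have hbc: "c b = t powr kc * c a" using c_hom t0 ao unfolding homogeneous_on_def b_def by auto
  define p where "p = m powr (ku / (kc - ku))"
  have p0: "p > 0" unfolding p_def using m1 by simp
  have tku: "t powr ku = p" unfolding t_def p_def using m1 by (simp add: powr_powr)
  have tkc: "t powr kc = p * m"
  proof -
    have "t powr kc = t powr (ku + (kc - ku))" by simp
    also have "\<dots> = t powr ku * t powr (kc - ku)" by (rule powr_add)
    finally show ?thesis using tm tku by simp
  qed
  have r1: "(2 * kc - 1) powr (- ku / (kc - ku)) = 1 / p"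
    unfolding p_def m_def[symmetric] using m1 by (simp add: powr_minus divide_inverse)
  have r2: "(2 * kc - 1) powr (- kc / (kc - ku)) = 1 / (p * m)"
  proof -
    have "kc / (kc - ku) = ku / (kc - ku) + 1" using ku by (simp add: field_simps)
    hence "m powr (kc / (kc - ku)) = p * m" unfolding p_def using m1 by (simp add: powr_add)
    thus ?thesis unfolding m_def[symmetric] using m1 by (simp add: powr_minus divide_inverse)
  qed
  define U where "U = u1 a + u2 a"
  have cU: "c a = ku * U / (kc * m)" using ca kc m1 unfolding U_def by (simp add: field_simps)
  have Wb0: "u1 b + u2 b - c b = p * U - p * m * c a"
    using hb1 hb2 hbc tku tkc unfolding U_def by (simp add: algebra_simps)
  have Wb: "u1 b + u2 b - c b = p * U * (kc - ku) / kc"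
    unfolding Wb0 cU using kc m1 by (simp add: field_simps)
  have U0: "U \<noteq> 0" using fb_pos FB Wb by auto
  have SWa: "SW_at u1 u2 c a_lin = U - ku * U / (kc * m)"
    unfolding SW_at_def a_def[symmetric] U_def using cU U_def by simp
  show ?thesis
    unfolding SWa FB Wb r1 r2 by (rule final_alg) (use U0 p0 kc ku m1 in auto)
qed

end
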